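(* Let $k$ be an étale cubic algebra over $\mathbb{Q}$ and $f$ a square free positive integer such that no prime number dividing $f$ is of type $3$ in $k$. Then for each ideal $\mathfrak{f}$ of $\mathcal{O}_k$ with $f\mathcal{O}_k\subset\mathfrak{f}$ and $N(\mathfrak{f})=f^2$, there exists exactly one order $R$ of index $f$ in $\mathcal{O}_k$ whose conductor is $\mathfrak{f}$, namely $R=\mathbb{Z}+\mathfrak{f}$.
   Context: An étale cubic algebra is a direct sum of number fields with total degree $3$; $\mathcal{O}_k$ is its maximal order; an order is a finite-index subring with unit of $\mathcal{O}_k$, and its conductor is the largest $\mathcal{O}_k$-ideal contained in it. $N(\mathfrak{f})=(\mathcal{O}_k:\mathfrak{f})$. A prime $p$ is of type $3$ in $k$ if $k$ is a cubic field in which $p$ is inert (i.e. $p\mathcal{O}_k$ is prime of norm $p^3$). *)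

theory Defs
  imports "HOL-Analysis.Analysis" "HOL-Computational_Algebra.Polynomial"
    "HOL-Computational_Algebra.Squarefree"
begin

text \<open>An etale cubic algebra over Q is represented (up to isomorphism) by its image
  under the three complex embeddings: a Q-subalgebra of complex^3 (componentwise
  operations) of Q-dimension 3.  Every such subalgebra is reduced, hence etale, and
  every etale cubic algebra arises this way.\<close>

definition etale_cubic :: "(complex^3) set \<Rightarrow> bool" where
  "etale_cubic K \<longleftrightarrow> 1 \<in> K \<and> (\<forall>x\<in>K. \<forall>y\<in>K. x + y \<in> K \<and> x * y \<in> K)
     \<and> (\<forall>q::rat. \<forall>x\<in>K. real_of_rat q *\<^sub>R x \<in> K)
     \<and> (\<exists>b1 b2 b3. b1 \<in> K \<and> b2 \<in> K \<and> b3 \<in> K \<and>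
          (\<forall>x\<in>K. \<exists>!q::rat \<times> rat \<times> rat.
             x = real_of_rat (fst q) *\<^sub>R b1 + real_of_rat (fst (snd q)) *\<^sub>R b2
                 + real_of_rat (snd (snd q)) *\<^sub>R b3))"

definition max_order :: "(complex^3) set \<Rightarrow> (complex^3) set" where
  "max_order K = {x \<in> K. \<exists>p::int poly. lead_coeff p = 1 \<and> poly (map_poly of_int p) x = 0}"

definition grp_index :: "(complex^3) set \<Rightarrow> (complex^3) set \<Rightarrow> nat" where
  "grp_index A B = card {(+) x ` B | x. x \<in> A}"

definition is_order :: "(complex^3) set \<Rightarrow> (complex^3) set \<Rightarrow> bool" where
  "is_order K R \<longleftrightarrow> R \<subseteq> max_order K \<and> 1 \<in> R \<and>
     (\<forall>x\<in>R. \<forall>y\<in>R. x + y \<in> R \<and> x - y \<in> R \<and> x * y \<in> R) \<and>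
     finite {(+) x ` R | x. x \<in> max_order K}"

definition O_ideal :: "(complex^3) set \<Rightarrow> (complex^3) set \<Rightarrow> bool" where
  "O_ideal OK I \<longleftrightarrow> I \<subseteq> OK \<and> 0 \<in> I \<and> (\<forall>x\<in>I. \<forall>y\<in>I. x + y \<in> I \<and> x - y \<in> I)
     \<and> (\<forall>a\<in>OK. \<forall>x\<in>I. a * x \<in> I)"

definition is_conductor :: "(complex^3) set \<Rightarrow> (complex^3) set \<Rightarrow> (complex^3) set \<Rightarrow> bool" where
  "is_conductor OK R F \<longleftrightarrow> O_ideal OK F \<and> F \<subseteq> R \<and> (\<forall>I. O_ideal OK I \<and> I \<subseteq> R \<longrightarrow> I \<subseteq> F)"

definition O_prime_ideal :: "(complex^3) set \<Rightarrow> (complex^3) set \<Rightarrow> bool" where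
  "O_prime_ideal OK P \<longleftrightarrow> O_ideal OK P \<and> P \<noteq> OK \<and>
     (\<forall>x\<in>OK. \<forall>y\<in>OK. x * y \<in> P \<longrightarrow> x \<in> P \<or> y \<in> P)"

definition alg_is_field :: "(complex^3) set \<Rightarrow> bool" where
  "alg_is_field K \<longleftrightarrow> (\<forall>x\<in>K. x \<noteq> 0 \<longrightarrow> (\<exists>y\<in>K. x * y = 1))"

definition scaled_order :: "nat \<Rightarrow> (complex^3) set \<Rightarrow> (complex^3) set" where
  "scaled_order n OK = {of_nat n * x | x. x \<in> OK}"

definition prime_type3 :: "(complex^3) set \<Rightarrow> nat \<Rightarrow> bool" where
  "prime_type3 K p \<longleftrightarrow> alg_is_field K \<and>
     O_prime_ideal (max_order K) (scaled_order p (max_order K)) \<and>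
     grp_index (max_order K) (scaled_order p (max_order K)) = p ^ 3"

end

theory Submission
  imports Defs "Jordan_Normal_Form.Char_Poly" "HOL-Algebra.Sylow" "HOL-Algebra.Coset" "HOL-Algebra.Multiplicative_Group"
begin


definition zspan :: "(nat \<Rightarrow> complex) \<Rightarrow> nat \<Rightarrow> complex set" where
  "zspan g N = range (\<lambda>c. (\<Sum>l<N. of_int (c l) * g l))"

lemma zspan_add: "u \<in> zspan g N \<Longrightarrow> v \<in> zspan g N \<Longrightarrow> u + v \<in> zspan g N"
proof -
  assume "u \<in> zspan g N" "v \<in> zspan g N"
  then obtain c d where "u = (\<Sum>l<N. of_int (c l) * g l)" "v = (\<Sum>l<N. of_int (d l) * g l)"
    unfolding zspan_def by auto
  then have "u + v = (\<Sum>l<N. of_int (c l + d l) * g l)"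
    by (simp add: sum.distrib distrib_right)
  then show ?thesis unfolding zspan_def by (rule range_eqI[where x="(\<lambda>l. c l + d l)"])
qed

lemma zspan_zero: "0 \<in> zspan g N"
proof -
  have "0 = (\<Sum>l<N. of_int ((\<lambda>_. 0) l) * g l)" by simp
  then show ?thesis unfolding zspan_def by (rule range_eqI[where x="(\<lambda>_. 0)"])
qed

lemma zspan_scal: "u \<in> zspan g N \<Longrightarrow> of_int a * u \<in> zspan g N"
proof -
  assume "u \<in> zspan g N"
  then obtain c where "u = (\<Sum>l<N. of_int (c l) * g l)"
    unfolding zspan_def by auto
  then have "of_int a * u = (\<Sum>l<N. of_int (a * c l) * g l)"
    by (simp add: sum_distrib_left mult.assoc)
  then show ?thesis unfolding zspan_def by (rule range_eqI[where x="(\<lambda>l. a * c l)"])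
qed

lemma zspan_sum: "finite S \<Longrightarrow> (\<And>i. i \<in> S \<Longrightarrow> h i \<in> zspan g N) \<Longrightarrow> (\<Sum>i\<in>S. h i) \<in> zspan g N"
  by (induction S rule: finite_induct) (auto intro: zspan_add zspan_zero)

lemma zspan_gen: "k < N \<Longrightarrow> g k \<in> zspan g N"
proof -
  assume k: "k < N"
  have "(\<Sum>l<N. of_int (if l = k then 1 else 0) * g l) = (\<Sum>l<N. if l = k then g l else 0)"
    by (rule sum.cong) auto
  then have "g k = (\<Sum>l<N. of_int (if l = k then 1 else 0) * g l)"
    using k by simp
  then show ?thesis unfolding zspan_def by (rule range_eqI[where x="(\<lambda>l. if l = k then 1 else 0)"])
qed

lemma eig_algint:
  fixes z :: complex and g :: "nat \<Rightarrow> complex"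
  assumes k0: "k0 < N" "g k0 \<noteq> 0" and cl: "\<forall>k<N. z * g k \<in> zspan g N"
  shows "algebraic_int z"
proof -
  have "\<forall>k<N. \<exists>c. z * g k = (\<Sum>l<N. of_int (c l) * g l)"
    using cl unfolding zspan_def by blast
  then obtain C where C: "\<And>k. k < N \<Longrightarrow> z * g k = (\<Sum>l<N. of_int (C k l) * g l)"
    by metis
  define A :: "int mat" where "A = Matrix.mat N N (\<lambda>(k,l). C k l)"
  define B :: "complex mat" where "B = map_mat of_int A"
  define v where "v = Matrix.vec N g"
  have A: "A \<in> carrier_mat N N" unfolding A_def by auto
  have B: "B \<in> carrier_mat N N" unfolding B_def using A by auto
  have "B *\<^sub>v v = z \<cdot>\<^sub>v v"
  proof (rule eq_vecI)
    show "dim_vec (B *\<^sub>v v) = dim_vec (z \<cdot>\<^sub>v v)" using B unfolding v_def by auto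
    fix k assume "k < dim_vec (z \<cdot>\<^sub>v v)"
    then have k: "k < N" unfolding v_def by auto
    have "(B *\<^sub>v v) $ k = (\<Sum>l<N. of_int (C k l) * g l)"
      using k B unfolding B_def A_def v_def
      by (simp add: mult_mat_vec_def scalar_prod_def lessThan_atLeast0)
    also have "\<dots> = (z \<cdot>\<^sub>v v) $ k" using C[OF k] k unfolding v_def by simp
    finally show "(B *\<^sub>v v) $ k = (z \<cdot>\<^sub>v v) $ k" .
  qed
  moreover have "v \<noteq> 0\<^sub>v N"
  proof
    assume "v = 0\<^sub>v N"
    then have "v $ k0 = 0" using k0 by simp
    then show False using k0 unfolding v_def by simp
  qed
  ultimately have "eigenvector B v z" unfolding eigenvector_def using B unfolding v_def by auto
  then have "eigenvalue B z" unfolding eigenvalue_def by blast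
  then have "poly (char_poly B) z = 0" using eigenvalue_root_char_poly[OF B] by simp
  moreover have "char_poly B = of_int_poly (char_poly A)"
    unfolding B_def using of_int_hom.char_poly_hom[OF A] by simp
  ultimately have "poly (of_int_poly (char_poly A)) z = 0" by simp
  moreover have "lead_coeff (char_poly A) = 1" using degree_monic_char_poly[OF A] by simp
  ultimately show ?thesis using algebraic_int_altdef_ipoly by blast
qed

lemma algint_pow_span:
  fixes x :: complex
  assumes "algebraic_int x"
  obtains m where "m > 0" "\<And>a. x ^ a \<in> zspan (\<lambda>i. x ^ i) m"
proof -
  obtain p where p: "poly (of_int_poly p) x = 0" "lead_coeff p = 1"
    using assms algebraic_int_altdef_ipoly by blast
  define m where "m = degree p"
  define P where "P = (of_int_poly p :: complex poly)"
  have dP: "degree P = m" unfolding P_def m_def by simp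
  have lP: "Polynomial.coeff P m = 1" using p(2) unfolding P_def m_def by (simp add: coeff_map_poly)
  have m0: "m > 0"
  proof (rule ccontr)
    assume "\<not> m > 0"
    then have "m = 0" by simp
    then have "P = [:1:]" using dP lP by (metis degree_0_id)
    then show False using p(1) unfolding P_def by simp
  qed
  have cP: "Polynomial.coeff P i \<in> \<int>" for i unfolding P_def by (simp add: coeff_map_poly)
  have key: "x ^ a \<in> zspan (\<lambda>i. x ^ i) m" for a
  proof (induction a rule: less_induct)
    case (less a)
    show ?case
    proof (cases "a < m")
      case True
      then show ?thesis using zspan_gen[of a m "\<lambda>i. x ^ i"] by simp
    next
      case False
      have "0 = poly P x" using p(1) unfolding P_def by simp
      also have "\<dots> = (\<Sum>i\<le>m. Polynomial.coeff P i * x ^ i)" using dP by (simp add: poly_altdef)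
      also have "\<dots> = (\<Sum>i<m. Polynomial.coeff P i * x ^ i) + x ^ m" using lP by (simp add: lessThan_Suc_atMost[symmetric])
      finally have xm: "x ^ m = - (\<Sum>i<m. Polynomial.coeff P i * x ^ i)" by (simp add: eq_neg_iff_add_eq_0 add.commute)
      have "x ^ a = x ^ (a - m) * x ^ m" using False by (simp add: power_add[symmetric])
      also have "\<dots> = (\<Sum>i<m. of_int (- (THE k. of_int k = Polynomial.coeff P i)) * x ^ (a - m + i))"
        unfolding xm
      proof -
        have "- (x ^ (a - m) * (\<Sum>i<m. Polynomial.coeff P i * x ^ i)) = (\<Sum>i<m. (- Polynomial.coeff P i) * x ^ (a - m + i))"
          by (simp add: sum_distrib_left sum_negf power_add algebra_simps)
        also have "\<dots> = (\<Sum>i<m. of_int (- (THE k. of_int k = Polynomial.coeff P i)) * x ^ (a - m + i))"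
        proof (rule sum.cong)
          fix i
          obtain k where "Polynomial.coeff P i = of_int k" using cP[of i] by (auto elim: Ints_cases)
          then show "(- Polynomial.coeff P i) * x ^ (a - m + i) = of_int (- (THE k. of_int k = Polynomial.coeff P i)) * x ^ (a - m + i)"
            by simp
        qed simp
        finally show "x ^ (a - m) * - (\<Sum>i<m. Polynomial.coeff P i * x ^ i) = (\<Sum>i<m. of_int (- (THE k. of_int k = Polynomial.coeff P i)) * x ^ (a - m + i))" by simp
      qed
      also have "\<dots> \<in> zspan (\<lambda>i. x ^ i) m"
        using False m0 by (intro zspan_sum zspan_scal less) auto
      finally show ?thesis .
    qed
  qed
  show ?thesis using that m0 key by blast
qed

lemma algint_add:
  fixes x y :: complex
  assumes "algebraic_int x" "algebraic_int y"
  shows "algebraic_int (x + y)"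
proof -
  obtain m where m: "m > 0" "\<And>a. x ^ a \<in> zspan (\<lambda>i. x ^ i) m" using algint_pow_span[OF assms(1)] by blast
  obtain n where n: "n > 0" "\<And>a. y ^ a \<in> zspan (\<lambda>i. y ^ i) n" using algint_pow_span[OF assms(2)] by blast
  define G where "G k = x ^ (k div n) * y ^ (k mod n)" for k
  have gen: "x ^ i * y ^ j \<in> zspan G (m * n)" if "i < m" "j < n" for i j
  proof -
    have "i * n + j < m * n"
    proof -
      have "i * n + j < Suc i * n" using that by simp
      also have "\<dots> \<le> m * n" using that by (intro mult_le_mono1) simp
      finally show ?thesis .
    qed
    then have "G (i * n + j) \<in> zspan G (m * n)" by (rule zspan_gen)
    moreover have "G (i * n + j) = x ^ i * y ^ j" unfolding G_def using that n(1) by simp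
    ultimately show ?thesis by simp
  qed
  have all: "x ^ a * y ^ b \<in> zspan G (m * n)" for a b
  proof -
    obtain c where c: "x ^ a = (\<Sum>i<m. of_int (c i) * x ^ i)" using m(2)[of a] unfolding zspan_def by auto
    obtain d where d: "y ^ b = (\<Sum>j<n. of_int (d j) * y ^ j)" using n(2)[of b] unfolding zspan_def by auto
    have "x ^ a * y ^ b = (\<Sum>i<m. \<Sum>j<n. of_int (c i * d j) * (x ^ i * y ^ j))"
      unfolding c d by (simp add: sum_distrib_left sum_distrib_right algebra_simps) (subst sum.swap, simp)
    also have "\<dots> \<in> zspan G (m * n)"
      by (intro zspan_sum zspan_scal gen) auto
    finally show ?thesis .
  qed
  show ?thesis
  proof (rule eig_algint[of 0 "m * n" G])
    show "0 < m * n" using m n by simp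
    show "G 0 \<noteq> 0" unfolding G_def by simp
    show "\<forall>k<m * n. (x + y) * G k \<in> zspan G (m * n)"
    proof (intro allI impI)
      fix k
      have eq: "(x + y) * G k = x ^ Suc (k div n) * y ^ (k mod n) + x ^ (k div n) * y ^ Suc (k mod n)"
        unfolding G_def by (simp add: algebra_simps)
      have h: "x ^ Suc (k div n) * y ^ (k mod n) + x ^ (k div n) * y ^ Suc (k mod n) \<in> zspan G (m * n)"
        by (intro zspan_add all)
      show "(x + y) * G k \<in> zspan G (m * n)" unfolding eq by (rule h)
    qed
  qed
qed




definition sgrp :: "(complex^3) set \<Rightarrow> bool" where
  "sgrp S \<longleftrightarrow> 0 \<in> S \<and> (\<forall>x\<in>S. \<forall>y\<in>S. x + y \<in> S \<and> x - y \<in> S)"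

definition addG :: "(complex^3) set \<Rightarrow> (complex^3) monoid" where
  "addG B = \<lparr>carrier = B, mult = (+), one = 0\<rparr>"

lemma sgrp_neg: "sgrp S \<Longrightarrow> x \<in> S \<Longrightarrow> - x \<in> S"
  unfolding sgrp_def by (metis diff_0)

lemma sgrp_nat: "sgrp S \<Longrightarrow> x \<in> S \<Longrightarrow> of_nat n * x \<in> S"
  by (induction n) (auto simp: sgrp_def distrib_right)

lemma sgrp_int: "sgrp S \<Longrightarrow> x \<in> S \<Longrightarrow> of_int n * x \<in> S"
proof (cases n rule: int_cases)
  case (nonneg m)
  assume "sgrp S" "x \<in> S"
  then show ?thesis using nonneg sgrp_nat[of S x m] by simp
next
  case (neg m)
  assume "sgrp S" "x \<in> S"
  have e: "(of_int n :: complex^3) = - of_nat (Suc m)" using neg by simp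
  have "of_int n * x = - (of_nat (Suc m) * x)" unfolding e by (simp add: algebra_simps)
  then show ?thesis using sgrp_nat[of S x "Suc m"] sgrp_neg[of S] \<open>sgrp S\<close> \<open>x \<in> S\<close> by simp
qed

lemma addG_comm_group: "sgrp B \<Longrightarrow> comm_group (addG B)"
proof -
  assume B: "sgrp B"
  show ?thesis unfolding addG_def
  proof (rule comm_groupI)
    fix x assume x: "x \<in> carrier \<lparr>carrier = B, mult = (+), one = 0\<rparr>"
    have "- x \<in> B" using sgrp_neg[OF B] x by simp
    then show "\<exists>y\<in>carrier \<lparr>carrier = B, mult = (+), one = 0\<rparr>. y \<otimes>\<^bsub>\<lparr>carrier = B, mult = (+), one = 0\<rparr>\<^esub> x = \<one>\<^bsub>\<lparr>carrier = B, mult = (+), one = 0\<rparr>\<^esub>"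
      by (intro bexI[where x="- x"]) auto
  next
    fix x y assume "x \<in> carrier \<lparr>carrier = B, mult = (+), one = 0\<rparr>" "y \<in> carrier \<lparr>carrier = B, mult = (+), one = 0\<rparr>"
    then show "x \<otimes>\<^bsub>\<lparr>carrier = B, mult = (+), one = 0\<rparr>\<^esub> y \<in> carrier \<lparr>carrier = B, mult = (+), one = 0\<rparr>"
      using B unfolding sgrp_def by simp
  next
    show "\<one>\<^bsub>\<lparr>carrier = B, mult = (+), one = 0\<rparr>\<^esub> \<in> carrier \<lparr>carrier = B, mult = (+), one = 0\<rparr>"
      using B unfolding sgrp_def by simp
  qed (simp_all add: add.assoc add.commute)
qed

lemma rcoset_addG: "A #>\<^bsub>addG B\<^esub> x = (+) x ` A"
  unfolding r_coset_def addG_def by (auto simp: add.commute)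

lemma GL:
  assumes A: "sgrp A" and B: "sgrp B" and AB: "A \<subseteq> B"
    and fin: "finite {(+) x ` A | x. x \<in> B}"
    and g: "\<forall>x\<in>B. of_nat g * x \<in> A"
    and p: "prime p" "p dvd card {(+) x ` A | x. x \<in> B}"
  shows "p dvd g"
proof (rule ccontr)
  assume npg: "\<not> p dvd g"
  interpret G: comm_group "addG B" using addG_comm_group[OF B] .
  have inv: "inv\<^bsub>addG B\<^esub> x = - x" if "x \<in> B" for x
    using that sgrp_neg[OF B that] by (intro G.inv_equality) (auto simp: addG_def)
  have sub: "subgroup A (addG B)"
  proof
    show "A \<subseteq> carrier (addG B)" using AB by (simp add: addG_def)
    show "\<one>\<^bsub>addG B\<^esub> \<in> A" using A by (simp add: addG_def sgrp_def)
    fix x y assume "x \<in> A" "y \<in> A"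
    then show "x \<otimes>\<^bsub>addG B\<^esub> y \<in> A" using A by (simp add: addG_def sgrp_def)
    show "inv\<^bsub>addG B\<^esub> x \<in> A" using inv[of x] \<open>x \<in> A\<close> AB sgrp_neg[OF A] by auto
  qed
  then interpret N: normal A "addG B" using G.subgroup_imp_normal by blast
  define Q where "Q = addG B Mod A"
  have Qg: "group Q" unfolding Q_def by (rule N.factorgroup_is_group)
  have carrQ: "carrier Q = {(+) x ` A | x. x \<in> B}"
    unfolding Q_def FactGroup_def RCOSETS_def rcoset_addG by (auto simp: addG_def)
  have oneQ: "\<one>\<^bsub>Q\<^esub> = A" unfolding Q_def FactGroup_def by simp
  obtain m where m: "card {(+) x ` A | x. x \<in> B} = p ^ 1 * m" using p(2) by auto
  obtain H where H: "subgroup H Q" "card H = p ^ 1"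
    using sylow_thm[OF p(1) Qg, of 1 m] m fin carrQ unfolding order_def by auto
  have "H \<noteq> {\<one>\<^bsub>Q\<^esub>}"
  proof
    assume "H = {\<one>\<^bsub>Q\<^esub>}"
    then have "card H = 1" by simp
    then show False using H(2) p(1) by auto
  qed
  moreover have "\<one>\<^bsub>Q\<^esub> \<in> H" using H(1) subgroup.one_closed by blast
  ultimately obtain X where X: "X \<in> H" "X \<noteq> \<one>\<^bsub>Q\<^esub>" by blast
  have XQ: "X \<in> carrier Q" using X H(1) subgroup.subset by blast
  then obtain x where x: "x \<in> B" "X = A #>\<^bsub>addG B\<^esub> x"
    unfolding Q_def FactGroup_def RCOSETS_def by (auto simp: addG_def)
  have pw: "X [^]\<^bsub>Q\<^esub> n = A #>\<^bsub>addG B\<^esub> (of_nat n * x)" for n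
  proof (induction n)
    case 0
    show ?case using oneQ AB G.coset_mult_one[of A] by (simp add: addG_def)
  next
    case (Suc n)
    have "X [^]\<^bsub>Q\<^esub> Suc n = (A #>\<^bsub>addG B\<^esub> (of_nat n * x)) <#>\<^bsub>addG B\<^esub> (A #>\<^bsub>addG B\<^esub> x)"
      using Suc x by (simp add: Q_def FactGroup_def)
    also have "\<dots> = A #>\<^bsub>addG B\<^esub> (of_nat n * x + x)"
      using N.rcos_sum[of "of_nat n * x" x] x sgrp_nat[OF B x(1)] by (simp add: addG_def)
    also have "of_nat n * x + x = of_nat (Suc n) * x" by (simp add: distrib_right)
    finally show ?case .
  qed
  have Xg: "X [^]\<^bsub>Q\<^esub> g = \<one>\<^bsub>Q\<^esub>"
    using pw[of g] g x oneQ subgroup.rcos_const[OF sub G.is_group, of "of_nat g * x"] by simp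
  interpret HG: group "Q\<lparr>carrier := H\<rparr>" using group.subgroup_imp_group[OF Qg H(1)] .
  have "X [^]\<^bsub>Q\<lparr>carrier := H\<rparr>\<^esub> order (Q\<lparr>carrier := H\<rparr>) = \<one>\<^bsub>Q\<lparr>carrier := H\<rparr>\<^esub>"
    using HG.pow_order_eq_1[of X] X by simp
  then have Xp: "X [^]\<^bsub>Q\<^esub> p = \<one>\<^bsub>Q\<^esub>"
    using H(2) monoid.nat_pow_consistent[of Q X p H] Qg unfolding order_def
    by (simp add: group.is_monoid)
  have "coprime p g" using npg p(1) by (simp add: prime_imp_coprime)
  moreover have "p \<noteq> 0" using p(1) by auto
  ultimately obtain u v where uv: "p * u = g * v + 1" using bezout_nat[of p g] by auto
  interpret QG: group Q using Qg .
  have "X [^]\<^bsub>Q\<^esub> (p * u) = \<one>\<^bsub>Q\<^esub>" using Xp XQ by (simp add: QG.nat_pow_pow[symmetric])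
  moreover have "X [^]\<^bsub>Q\<^esub> (g * v + 1) = X" using Xg XQ
    by (simp add: QG.nat_pow_mult[symmetric] QG.nat_pow_pow[symmetric])
  ultimately show False using uv X(2) by simp
qed




lemma of_int_idx: "(of_int n :: 'a::ring_1^'n) $ i = of_int n"
  by (cases n rule: int_cases) (simp_all add: of_nat_index)

lemma poly_comp: "(poly (map_poly of_int p) (x :: 'a::comm_ring_1^'n)) $ i = poly (map_poly of_int p) (x $ i)"
  by (induction p rule: pCons_induct) (simp_all add: of_int_idx)

lemma max_order_iff: "x \<in> max_order K \<longleftrightarrow> x \<in> K \<and> (\<forall>i. algebraic_int (x $ i))"
proof
  assume "x \<in> max_order K"
  then obtain p where p: "x \<in> K" "lead_coeff p = 1" "poly (map_poly of_int p) x = 0"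
    unfolding max_order_def by auto
  have "algebraic_int (x $ i)" for i
  proof -
    have "poly (map_poly of_int p) (x $ i) = 0" using poly_comp[of p x i] p(3) by simp
    then show ?thesis using p(2) algebraic_int_altdef_ipoly by blast
  qed
  then show "x \<in> K \<and> (\<forall>i. algebraic_int (x $ i))" using p(1) by blast
next
  assume a: "x \<in> K \<and> (\<forall>i. algebraic_int (x $ i))"
  then have "\<forall>i. \<exists>p. poly (map_poly of_int p) (x $ i) = (0::complex) \<and> lead_coeff p = 1"
    using algebraic_int_altdef_ipoly by blast
  then obtain P where P: "\<And>i. poly (map_poly of_int (P i)) (x $ i) = (0::complex)"
      "\<And>i. lead_coeff (P i) = (1::int)" by metis
  define p where "p = (\<Prod>i\<in>UNIV. P i)"
  have "lead_coeff p = 1" unfolding p_def lead_coeff_prod using P(2) by simp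
  moreover have "poly (map_poly of_int p) x = 0"
  proof (rule Finite_Cartesian_Product.vec_eq_iff[THEN iffD2], intro allI)
    fix i
    have "poly (map_poly of_int p) x $ i = poly (map_poly of_int p) (x $ i)" by (rule poly_comp)
    also have "\<dots> = (\<Prod>j\<in>UNIV. poly (map_poly of_int (P j)) (x $ i))"
      unfolding p_def of_int_poly_hom.hom_prod poly_prod ..
    also have "\<dots> = 0" by (rule prod_zero) (use P(1)[of i] in auto)
    finally show "poly (map_poly of_int p) x $ i = 0 $ i" by simp
  qed
  ultimately show "x \<in> max_order K" using a unfolding max_order_def by blast
qed

lemma etK:
  assumes "etale_cubic K"
  shows "1 \<in> K" "\<And>x y. x \<in> K \<Longrightarrow> y \<in> K \<Longrightarrow> x + y \<in> K"
    "\<And>x y. x \<in> K \<Longrightarrow> y \<in> K \<Longrightarrow> x * y \<in> K"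
    "\<And>x q. x \<in> K \<Longrightarrow> real_of_rat q *\<^sub>R x \<in> K"
  using assms unfolding etale_cubic_def by blast+

lemma O_add: "etale_cubic K \<Longrightarrow> x \<in> max_order K \<Longrightarrow> y \<in> max_order K \<Longrightarrow> x + y \<in> max_order K"
  unfolding max_order_iff using etK(2) algint_add by auto

lemma O_neg: "etale_cubic K \<Longrightarrow> x \<in> max_order K \<Longrightarrow> - x \<in> max_order K"
proof -
  assume et: "etale_cubic K" and x: "x \<in> max_order K"
  have "real_of_rat (-1) *\<^sub>R x \<in> K" using etK(4)[OF et] x unfolding max_order_iff by blast
  then have "- x \<in> K" by simp
  then show ?thesis using x unfolding max_order_iff by simp
qed

lemma O_int: "etale_cubic K \<Longrightarrow> of_int n \<in> max_order K"
proof -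
  assume et: "etale_cubic K"
  have "real_of_rat (of_int n) *\<^sub>R (1 :: complex^3) \<in> K" using etK(1,4)[OF et] by blast
  moreover have "real_of_rat (of_int n) *\<^sub>R (1 :: complex^3) = of_int n"
    by (simp add: Finite_Cartesian_Product.vec_eq_iff of_int_idx scaleR_conv_of_real)
  ultimately show ?thesis unfolding max_order_iff by (simp add: of_int_idx)
qed

lemma sgrp_O: "etale_cubic K \<Longrightarrow> sgrp (max_order K)"
  unfolding sgrp_def using O_int[of K 0] O_add O_neg
  by (metis diff_conv_add_uminus of_int_0)

lemma coset_eq: "sgrp S \<Longrightarrow> ((+) x ` S = (+) y ` S) \<longleftrightarrow> x - y \<in> S"
proof
  assume S: "sgrp S" and e: "(+) x ` S = (+) y ` S"
  have "x \<in> (+) x ` S" using S unfolding sgrp_def by (metis add_0_right image_eqI)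
  then obtain s where "s \<in> S" "x = y + s" using e by auto
  then show "x - y \<in> S" by simp
next
  assume S: "sgrp S" and d: "x - y \<in> S"
  show "(+) x ` S = (+) y ` S"
  proof
    show "(+) x ` S \<subseteq> (+) y ` S"
    proof
      fix t assume "t \<in> (+) x ` S"
      then obtain s where s: "s \<in> S" "t = x + s" by auto
      have "(x - y) + s \<in> S" using S d s(1) unfolding sgrp_def by blast
      moreover have "t = y + ((x - y) + s)" using s by simp
      ultimately show "t \<in> (+) y ` S" by blast
    qed
    show "(+) y ` S \<subseteq> (+) x ` S"
    proof
      fix t assume "t \<in> (+) y ` S"
      then obtain s where s: "s \<in> S" "t = y + s" by auto
      have "s - (x - y) \<in> S" using S d s(1) unfolding sgrp_def by blast
      moreover have "t = x + (s - (x - y))" using s by simp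
      ultimately show "t \<in> (+) x ` S" by blast
    qed
  qed
qed

lemma hmap: "sgrp R \<Longrightarrow> F \<subseteq> R \<Longrightarrow> 0 \<in> F \<Longrightarrow> {c + r | c r. c \<in> (+) x ` F \<and> r \<in> R} = (+) x ` R"
proof -
  assume R: "sgrp R" and FR: "F \<subseteq> R" and F0: "0 \<in> F"
  show ?thesis
  proof
    show "{c + r | c r. c \<in> (+) x ` F \<and> r \<in> R} \<subseteq> (+) x ` R"
    proof
      fix t assume "t \<in> {c + r | c r. c \<in> (+) x ` F \<and> r \<in> R}"
      then obtain y r where yr: "y \<in> F" "r \<in> R" "t = x + y + r" by auto
      have "y + r \<in> R" using R FR yr unfolding sgrp_def by blast
      then show "t \<in> (+) x ` R" using yr(3) by (simp add: add.assoc)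
    qed
    show "(+) x ` R \<subseteq> {c + r | c r. c \<in> (+) x ` F \<and> r \<in> R}"
    proof
      fix t assume "t \<in> (+) x ` R"
      then obtain r where r: "r \<in> R" "t = x + r" by auto
      have "x \<in> (+) x ` F" using F0 by (metis add_0_right image_eqI)
      then show "t \<in> {c + r | c r. c \<in> (+) x ` F \<and> r \<in> R}" using r by blast
    qed
  qed
qed

lemma sqf_prime:
  fixes f d :: nat
  assumes "squarefree f" "f > 0" "d dvd f" "d \<noteq> f"
  shows "\<exists>p. prime p \<and> p dvd f \<and> \<not> p dvd d"
proof -
  obtain e where e: "f = d * e" using assms(3) by auto
  have "e \<noteq> 1" using e assms(4) by auto
  then obtain p where p: "prime p" "p dvd e" using prime_factor_nat by blast
  have pf: "p dvd f" using e p(2) by simp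
  have "\<not> p dvd d"
  proof
    assume "p dvd d"
    then have "p * p dvd d * e" using p(2) by (rule mult_dvd_mono)
    then have "p ^ 2 dvd f" using e by (simp add: power2_eq_square)
    then have "p dvd 1" using assms(1) unfolding squarefree_def by blast
    then show False using p(1) by simp
  qed
  then show ?thesis using p(1) pf by blast
qed

lemma gcd_part:
  fixes n :: int and f :: nat
  assumes "f > 0" "\<not> int f dvd n"
  shows "nat (gcd n (int f)) dvd f" "nat (gcd n (int f)) \<noteq> f" "int (nat (gcd n (int f))) = gcd n (int f)"
proof -
  show i: "int (nat (gcd n (int f))) = gcd n (int f)" by simp
  have "gcd n (int f) dvd int f" by simp
  then show "nat (gcd n (int f)) dvd f" using i by (metis int_dvd_int_iff)
  show "nat (gcd n (int f)) \<noteq> f"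
  proof
    assume "nat (gcd n (int f)) = f"
    then have "gcd n (int f) = int f" using i by simp
    then have "int f dvd n" by (metis gcd_dvd1)
    then show False using assms(2) by simp
  qed
qed




theorem proposition2p7:
  fixes K F :: "(complex^3) set" and f :: nat
  assumes "etale_cubic K"
    and "f > 0" and "squarefree f"
    and "\<forall>p. prime p \<and> p dvd f \<longrightarrow> \<not> prime_type3 K p"
    and "O_ideal (max_order K) F"
    and "scaled_order f (max_order K) \<subseteq> F"
    and "grp_index (max_order K) F = f ^ 2"
  shows "\<forall>R. (is_order K R \<and> grp_index (max_order K) R = f \<and> is_conductor (max_order K) R F)
           \<longleftrightarrow> R = {of_int n + x | n x. x \<in> F}"
proof -
  define OK where "OK = max_order K"
  have et: "etale_cubic K" by fact
  have fpos: "f > 0" by fact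
  have sO: "sgrp OK" unfolding OK_def using sgrp_O[OF et] .
  have addO: "\<And>x y. x \<in> OK \<Longrightarrow> y \<in> OK \<Longrightarrow> x + y \<in> OK" using sO unfolding sgrp_def by blast
  have intO: "\<And>n. of_int n \<in> OK" unfolding OK_def using O_int[OF et] by blast
  have oneO: "1 \<in> OK" using intO[of 1] by simp
  have Fid: "O_ideal OK F" using assms(5) unfolding OK_def .
  have FO: "F \<subseteq> OK" using Fid unfolding O_ideal_def by blast
  have sF: "sgrp F" using Fid unfolding O_ideal_def sgrp_def by blast
  have F0: "0 \<in> F" using sF unfolding sgrp_def by blast
  have Fmul: "\<And>a x. a \<in> OK \<Longrightarrow> x \<in> F \<Longrightarrow> a * x \<in> F" using Fid unfolding O_ideal_def by blast
  have fO: "\<And>x. x \<in> OK \<Longrightarrow> of_nat f * x \<in> F" using assms(6) unfolding scaled_order_def OK_def by blast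
  have fF: "of_nat f \<in> F" using fO[OF oneO] by simp
  have Fint: "\<And>n x. x \<in> F \<Longrightarrow> of_int n * x \<in> F" using Fmul intO by blast
  define CF where "CF = {(+) x ` F | x. x \<in> OK}"
  have cardCF: "card CF = f ^ 2" using assms(7) unfolding CF_def OK_def grp_index_def .
  have finCF: "finite CF"
  proof (rule ccontr)
    assume "\<not> finite CF"
    then have "card CF = 0" by simp
    then show False using cardCF fpos by simp
  qed
  have A: "int f dvd n" if n: "of_int n \<in> F" for n
  proof (rule ccontr)
    assume nd: "\<not> int f dvd n"
    define d where "d = gcd n (int f)"
    obtain u v where uv: "u * n + v * int f = d" using bezout_int[of n "int f"] unfolding d_def by auto
    have "(of_int d :: complex^3) = of_int u * of_int n + of_int v * of_nat f"
      unfolding uv[symmetric] by simp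
    moreover have "of_int u * of_int n + of_int v * of_nat f \<in> F"
      using Fint[OF n, of u] Fint[OF fF, of v] sF unfolding sgrp_def by blast
    ultimately have dF: "of_int d \<in> F" by simp
    define dn where "dn = nat d"
    have dn: "dn dvd f" "dn \<noteq> f" "int dn = d" using gcd_part[OF fpos nd] unfolding dn_def d_def by auto
    obtain p where p: "prime p" "p dvd f" "\<not> p dvd dn" using sqf_prime[OF assms(3) fpos dn(1,2)] by blast
    have "p dvd dn"
    proof (rule GL[OF sF sO FO])
      show "finite {(+) x ` F | x. x \<in> OK}" using finCF unfolding CF_def .
      show "\<forall>x\<in>OK. of_nat dn * x \<in> F"
      proof
        fix x assume "x \<in> OK"
        then have "x * of_int d \<in> F" using Fmul dF by blast
        then show "of_nat dn * x \<in> F" using dn(3) by (metis mult.commute of_int_of_nat_eq)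
      qed
      show "prime p" by fact
      show "p dvd card {(+) x ` F | x. x \<in> OK}" using p(2) cardCF unfolding CF_def by (simp add: power2_eq_square)
    qed
    then show False using p(3) by simp
  qed
  define R0 where "R0 = {of_int n + x | n x. x \<in> F}"
  have R0I: "of_int n + x \<in> R0" if "x \<in> F" for n x using that unfolding R0_def by blast
  have R0E: "\<exists>n y. x = of_int n + y \<and> y \<in> F" if "x \<in> R0" for x using that unfolding R0_def by blast
  have sR0: "sgrp R0"
    unfolding sgrp_def
  proof (intro conjI ballI)
    show "0 \<in> R0" using R0I[OF F0, of 0] by simp
    fix x y assume "x \<in> R0" "y \<in> R0"
    then obtain a b x' y' where xy: "x = of_int a + x'" "y = of_int b + y'" "x' \<in> F" "y' \<in> F"
      using R0E by metis
    have "x + y = of_int (a + b) + (x' + y')" using xy by simp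
    moreover have "x' + y' \<in> F" using sF xy unfolding sgrp_def by blast
    ultimately show "x + y \<in> R0" using R0I by metis
    have "x - y = of_int (a - b) + (x' - y')" using xy by simp
    moreover have "x' - y' \<in> F" using sF xy unfolding sgrp_def by blast
    ultimately show "x - y \<in> R0" using R0I by metis
  qed
  have FR0: "F \<subseteq> R0" using R0I[of _ 0] by auto
  have intR0: "of_int n \<in> R0" for n using R0I[OF F0, of n] by simp
  have R0O: "R0 \<subseteq> OK"
  proof
    fix x assume "x \<in> R0"
    then obtain n y where "x = of_int n + y" "y \<in> F" using R0E by blast
    then show "x \<in> OK" using addO intO FO by blast
  qed
  define CR0 where "CR0 = {(+) x ` R0 | x. x \<in> OK}"
  define h where "h C = {c + r | c r. c \<in> C \<and> r \<in> R0}" for C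
  have hx: "h ((+) x ` F) = (+) x ` R0" for x unfolding h_def using hmap[OF sR0 FR0 F0] .
  have himg: "h ` CF = CR0" unfolding CF_def CR0_def using hx by auto
  have finCR0: "finite CR0" using finCF himg by blast
  have fiber: "{C \<in> CF. h C = (+) x ` R0} = (\<lambda>k. (+) (x + of_int k) ` F) ` {0..<int f}"
    if x: "x \<in> OK" for x
  proof
    show "{C \<in> CF. h C = (+) x ` R0} \<subseteq> (\<lambda>k. (+) (x + of_int k) ` F) ` {0..<int f}"
    proof
      fix C assume "C \<in> {C \<in> CF. h C = (+) x ` R0}"
      then obtain y where y: "y \<in> OK" "C = (+) y ` F" "(+) y ` R0 = (+) x ` R0"
        unfolding CF_def using hx by auto
      then have "y - x \<in> R0" using coset_eq[OF sR0] by blast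
      then obtain n z where nz: "y - x = of_int n + z" "z \<in> F" using R0E by blast
      define k where "k = n mod int f"
      have k: "k \<in> {0..<int f}" unfolding k_def using fpos by simp
      have "n - k = int f * (n div int f)" unfolding k_def by (rule minus_mod_eq_mult_div)
      then have "(of_int (n - k) :: complex^3) = of_int (n div int f) * of_nat f" by simp
      then have nk: "of_int (n - k) \<in> F" using Fint[OF fF] by simp
      have eqy: "y - (x + of_int k) = of_int (n - k) + z" using nz by (simp add: algebra_simps)
      have "of_int (n - k) + z \<in> F" using nk nz(2) sF unfolding sgrp_def by blast
      then have "y - (x + of_int k) \<in> F" unfolding eqy .
      then have "C = (+) (x + of_int k) ` F" using y(2) coset_eq[OF sF] by blast
      then show "C \<in> (\<lambda>k. (+) (x + of_int k) ` F) ` {0..<int f}" using k by blast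
    qed
    show "(\<lambda>k. (+) (x + of_int k) ` F) ` {0..<int f} \<subseteq> {C \<in> CF. h C = (+) x ` R0}"
    proof
      fix C assume "C \<in> (\<lambda>k. (+) (x + of_int k) ` F) ` {0..<int f}"
      then obtain k where k: "C = (+) (x + of_int k) ` F" by blast
      have "x + of_int k \<in> OK" using addO[OF x intO] .
      then have "C \<in> CF" unfolding CF_def k by blast
      moreover have "h C = (+) (x + of_int k) ` R0" unfolding k hx ..
      moreover have "(+) (x + of_int k) ` R0 = (+) x ` R0"
        using coset_eq[OF sR0] intR0[of k] by simp
      ultimately show "C \<in> {C \<in> CF. h C = (+) x ` R0}" by simp
    qed
  qed
  have injk: "inj_on (\<lambda>k. (+) (x + of_int k) ` F) {0..<int f}" for x
  proof (rule inj_onI)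
    fix k l assume kl: "k \<in> {0..<int f}" "l \<in> {0..<int f}"
      "(+) (x + of_int k) ` F = (+) (x + of_int l) ` F"
    then have "(x + of_int k) - (x + of_int l) \<in> F" using coset_eq[OF sF] by blast
    then have "of_int (k - l) \<in> F" by simp
    then have "int f dvd k - l" by (rule A)
    then show "k = l"
    proof (rule contrapos_pp)
      assume "k \<noteq> l"
      then have "\<bar>int f\<bar> \<le> \<bar>k - l\<bar>" if "int f dvd k - l" using that dvd_imp_le_int[of "k - l" "int f"] by simp
      moreover have "\<bar>k - l\<bar> < int f" using kl(1,2) by auto
      ultimately show "\<not> int f dvd k - l" by fastforce
    qed
  qed
  have cardfib: "card {C \<in> CF. h C = D} = f" if D: "D \<in> CR0" for D
  proof -
    obtain x where x: "x \<in> OK" "D = (+) x ` R0" using D unfolding CR0_def by blast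
    show ?thesis unfolding x(2) fiber[OF x(1)] using card_image[OF injk[of x]] by simp
  qed
  have CFU: "CF = (\<Union>D\<in>CR0. {C \<in> CF. h C = D})" using himg by blast
  have "card CF = card (\<Union>D\<in>CR0. {C \<in> CF. h C = D})" by (rule arg_cong[where f=card, OF CFU])
  also have "\<dots> = (\<Sum>D\<in>CR0. card {C \<in> CF. h C = D})"
    by (rule card_UN_disjoint) (use finCR0 finCF in auto)
  also have "\<dots> = (\<Sum>D\<in>CR0. f)" using cardfib by simp
  also have "\<dots> = f * card CR0" by simp
  finally have "f * f = f * card CR0" using cardCF by (simp add: power2_eq_square)
  then have cardCR0: "card CR0 = f" using fpos by simp
  have cond: "I \<subseteq> F" if I: "O_ideal OK I" "I \<subseteq> R0" for I
  proof
    fix x assume xI: "x \<in> I"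
    then obtain n y where ny: "x = of_int n + y" "y \<in> F" using I(2) R0E by blast
    have "int f dvd n"
    proof (rule ccontr)
      assume nd: "\<not> int f dvd n"
      define d where "d = gcd n (int f)"
      obtain u v where uv: "u * n + v * int f = d" using bezout_int[of n "int f"] unfolding d_def by auto
      define dn where "dn = nat d"
      have dn: "dn dvd f" "dn \<noteq> f" "int dn = d" using gcd_part[OF fpos nd] unfolding dn_def d_def by auto
      obtain p where p: "prime p" "p dvd f" "\<not> p dvd dn" using sqf_prime[OF assms(3) fpos dn(1,2)] by blast
      have "p dvd dn"
      proof (rule GL[OF sR0 sO R0O])
        show "finite {(+) x ` R0 | x. x \<in> OK}" using finCR0 unfolding CR0_def .
        show "\<forall>z\<in>OK. of_nat dn * z \<in> R0"
        proof
          fix z assume z: "z \<in> OK"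
          have zx: "z * x \<in> R0" using I z xI unfolding O_ideal_def by blast
          have zy: "z * y \<in> R0" using Fmul[OF z ny(2)] FR0 by blast
          have fz: "of_nat f * z \<in> R0" using fO[OF z] FR0 by blast
          have zxy: "z * x - z * y = of_int n * z" using ny by (simp add: algebra_simps)
          have "of_int u * (z * x - z * y) + of_int v * (of_nat f * z) = of_int u * (of_int n * z) + of_int v * (of_nat f * z)"
            unfolding zxy ..
          also have "\<dots> = of_int (u * n + v * int f) * z"
            by (simp add: algebra_simps)
          also have "\<dots> = of_nat dn * z" unfolding uv dn(3)[symmetric] by simp
          finally have eq: "of_nat dn * z = of_int u * (z * x - z * y) + of_int v * (of_nat f * z)" by simp
          have "z * x - z * y \<in> R0" using sR0 zx zy unfolding sgrp_def by blast
          then have "of_int u * (z * x - z * y) \<in> R0" using sgrp_int[OF sR0] by blast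
          moreover have "of_int v * (of_nat f * z) \<in> R0" using sgrp_int[OF sR0 fz] by blast
          ultimately show "of_nat dn * z \<in> R0" unfolding eq using sR0 unfolding sgrp_def by blast
        qed
        show "prime p" by fact
        show "p dvd card {(+) x ` R0 | x. x \<in> OK}" using p(2) cardCR0 unfolding CR0_def by simp
      qed
      then show False using p(3) by simp
    qed
    then obtain t where t: "n = int f * t" by blast
    have "(of_int n :: complex^3) = of_int t * of_nat f" using t by simp
    then have "of_int n \<in> F" using Fint[OF fF] by simp
    then show "x \<in> F" using ny sF unfolding sgrp_def by blast
  qed
  have Rset: "{of_int n + x | n x. x \<in> F} = R0" unfolding R0_def ..
  show ?thesis
    unfolding Rset OK_def[symmetric]
  proof (intro allI iffI)
    fix R assume R: "is_order K R \<and> grp_index OK R = f \<and> is_conductor OK R F"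
    have RO: "R \<subseteq> OK" and oneR: "1 \<in> R" and clR: "\<forall>x\<in>R. \<forall>y\<in>R. x + y \<in> R \<and> x - y \<in> R \<and> x * y \<in> R"
      using R unfolding is_order_def OK_def by blast+
    have sR: "sgrp R" unfolding sgrp_def using clR oneR by (metis diff_self)
    have FR: "F \<subseteq> R" using R unfolding is_conductor_def by blast
    have R0R: "R0 \<subseteq> R"
    proof
      fix x assume "x \<in> R0"
      then obtain n y where "x = of_int n + y" "y \<in> F" using R0E by blast
      moreover have "of_int n \<in> R" using sgrp_int[OF sR oneR, of n] by simp
      ultimately show "x \<in> R" using FR clR by blast
    qed
    show "R = R0"
    proof (rule ccontr)
      assume "R \<noteq> R0"
      then obtain r where r: "r \<in> R" "r \<notin> R0" using R0R by blast
      define CR where "CR = {(+) x ` R | x. x \<in> OK}"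
      have cardCR: "card CR = f" using R unfolding CR_def grp_index_def by simp
      define h2 where "h2 C = {c + s | c s. c \<in> C \<and> s \<in> R}" for C
      have R00: "0 \<in> R0" using sR0 unfolding sgrp_def by blast
      have h2x: "h2 ((+) x ` R0) = (+) x ` R" for x
        unfolding h2_def using hmap[OF sR R0R R00] .
      have h2img: "h2 ` CR0 = CR" unfolding CR0_def CR_def using h2x by auto
      have "\<not> inj_on h2 CR0"
      proof
        assume inj: "inj_on h2 CR0"
        have m1: "(+) r ` R0 \<in> CR0" using r RO unfolding CR0_def by blast
        have m2: "(+) 0 ` R0 \<in> CR0" using sO unfolding CR0_def sgrp_def by blast
        have "(+) r ` R = (+) 0 ` R" using coset_eq[OF sR, of r 0] r(1) by simp
        then have "h2 ((+) r ` R0) = h2 ((+) 0 ` R0)" unfolding h2x .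
        then have "(+) r ` R0 = (+) 0 ` R0" using inj m1 m2 by (meson inj_onD)
        then have "r \<in> R0" using coset_eq[OF sR0, of r 0] by simp
        then show False using r(2) by simp
      qed
      then have "card (h2 ` CR0) \<noteq> card CR0" using inj_on_iff_eq_card[OF finCR0, of h2] by simp
      then show False using h2img cardCR cardCR0 by simp
    qed
  next
    fix R assume RR: "R = R0"
    have "is_order K R0"
      unfolding is_order_def OK_def[symmetric]
    proof (intro conjI ballI)
      show "R0 \<subseteq> OK" by (rule R0O)
      show "1 \<in> R0" using intR0[of 1] by simp
      show "finite {(+) x ` R0 | x. x \<in> OK}" using finCR0 unfolding CR0_def .
      fix x y assume xy: "x \<in> R0" "y \<in> R0"
      then show "x + y \<in> R0" "x - y \<in> R0" using sR0 unfolding sgrp_def by blast+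
      obtain a b x' y' where e: "x = of_int a + x'" "y = of_int b + y'" "x' \<in> F" "y' \<in> F"
        using xy R0E by metis
      have "x * y = of_int (a * b) + (of_int a * y' + of_int b * x' + x' * y')"
        using e by (simp add: algebra_simps)
      moreover have "of_int a * y' + of_int b * x' + x' * y' \<in> F"
      proof -
        have t1: "of_int a * y' \<in> F" using Fint e(4) .
        have t2: "of_int b * x' \<in> F" using Fint e(3) .
        have t3: "x' * y' \<in> F" using Fmul FO e(3,4) by blast
        show ?thesis using t1 t2 t3 sF unfolding sgrp_def by blast
      qed
      ultimately show "x * y \<in> R0" using R0I by metis
    qed
    moreover have "grp_index OK R0 = f" using cardCR0 unfolding grp_index_def CR0_def .
    moreover have "is_conductor OK R0 F"
      unfolding is_conductor_def using Fid FR0 cond by blast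
    ultimately show "is_order K R \<and> grp_index OK R = f \<and> is_conductor OK R F" using RR by simp
  qed
qed


end
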